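(* Let $\mathcal{R}$ be a cell space with finite stabiliser $G_0$, let $A$ be a finite subset of $M$, and let $\mathfrak{g}\in G/G_0$. Then $|(\cdot\triangleleft\mathfrak{g})^{-1}(A)|\leq|G_0|\cdot|A|$.
   Context: A cell space $\mathcal{R}$ consists of a group $G$ acting transitively on the left on a nonempty set $M$ via $\triangleright$, a point $m_0\in M$ and a family $(g_{m_0,m})_{m\in M}$ in $G$ with $g_{m_0,m}\triangleright m_0=m$. $G_0$ is the stabiliser of $m_0$ and $G/G_0$ the set of left cosets. The right semi-action $\triangleleft\colon M\times G/G_0\to M$ is $m\triangleleft gG_0=g_{m_0,m}g\triangleright m_0$, and $(\cdot\triangleleft\mathfrak{g})^{-1}(A)=\{m\in M: m\triangleleft\mathfrak{g}\in A\}$. *)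

theory Defs
  imports "HOL-Algebra.Group_Action"
begin

definition cell_space ::
  "('a, 'c) monoid_scheme \<Rightarrow> 'b set \<Rightarrow> ('a \<Rightarrow> 'b \<Rightarrow> 'b) \<Rightarrow> 'b \<Rightarrow> ('b \<Rightarrow> 'a) \<Rightarrow> bool" where
  "cell_space G M phi m0 gf \<longleftrightarrow>
     transitive_action G M phi \<and> M \<noteq> {} \<and> m0 \<in> M \<and>
     (\<forall>m \<in> M. gf m \<in> carrier G \<and> phi (gf m) m0 = m)"

definition G0 :: "('a, 'c) monoid_scheme \<Rightarrow> ('a \<Rightarrow> 'b \<Rightarrow> 'b) \<Rightarrow> 'b \<Rightarrow> 'a set" where
  "G0 G phi m0 = stabilizer G phi m0"

definition left_cosets_G0 :: "('a, 'c) monoid_scheme \<Rightarrow> ('a \<Rightarrow> 'b \<Rightarrow> 'b) \<Rightarrow> 'b \<Rightarrow> 'a set set" where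
  "left_cosets_G0 G phi m0 = {g <#\<^bsub>G\<^esub> G0 G phi m0 | g. g \<in> carrier G}"

text \<open>The right semi-action m \<triangleleft> gG0 = (gf m \<otimes> g) \<triangleright> m0, computed with a chosen
  representative g of the coset (the value does not depend on the choice).\<close>
definition semi_act ::
  "('a, 'c) monoid_scheme \<Rightarrow> ('a \<Rightarrow> 'b \<Rightarrow> 'b) \<Rightarrow> 'b \<Rightarrow> ('b \<Rightarrow> 'a) \<Rightarrow> 'b \<Rightarrow> 'a set \<Rightarrow> 'b" where
  "semi_act G phi m0 gf m cs =
     phi (gf m \<otimes>\<^bsub>G\<^esub> (SOME g. g \<in> carrier G \<and> cs = g <#\<^bsub>G\<^esub> G0 G phi m0)) m0"

definition semi_act_preimage ::
  "('a, 'c) monoid_scheme \<Rightarrow> 'b set \<Rightarrow> ('a \<Rightarrow> 'b \<Rightarrow> 'b) \<Rightarrow> 'b \<Rightarrow> ('b \<Rightarrow> 'a) \<Rightarrow> 'a set \<Rightarrow> 'b set \<Rightarrow> 'b set" where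
  "semi_act_preimage G M phi m0 gf cs A = {m \<in> M. semi_act G phi m0 gf m cs \<in> A}"

end

theory Submission
  imports Defs
begin

lemma fiber_bound:
  assumes cs: "cell_space G M phi m0 gf" and fin: "finite (G0 G phi m0)"
    and g: "g \<in> carrier G" and a: "a \<in> M"
  shows "finite {m \<in> M. phi (gf m \<otimes>\<^bsub>G\<^esub> g) m0 = a} \<and>
         card {m \<in> M. phi (gf m \<otimes>\<^bsub>G\<^esub> g) m0 = a} \<le> card (G0 G phi m0)"
proof -
  interpret transitive_action G M phi using cs unfolding cell_space_def by auto
  have grp: "group G" using group_hom group_hom.axioms(1) by blast
  have m0: "m0 \<in> M" and gfp: "\<And>m. m \<in> M \<Longrightarrow> gf m \<in> carrier G \<and> phi (gf m) m0 = m"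
    using cs unfolding cell_space_def by auto
  define k where "k = gf a"
  have k: "k \<in> carrier G" "phi k m0 = a" using gfp a k_def by auto
  define F where "F = {m \<in> M. phi (gf m \<otimes>\<^bsub>G\<^esub> g) m0 = a}"
  define f where "f m = inv\<^bsub>G\<^esub> k \<otimes>\<^bsub>G\<^esub> (gf m \<otimes>\<^bsub>G\<^esub> g)" for m
  have one: "phi \<one>\<^bsub>G\<^esub> m0 = m0" using id_eq_one m0 by (metis restrict_apply')
  have "f ` F \<subseteq> G0 G phi m0"
  proof
    fix x assume "x \<in> f ` F"
    then obtain m where m: "m \<in> M" "phi (gf m \<otimes>\<^bsub>G\<^esub> g) m0 = a" and x: "x = f m"
      unfolding F_def by auto
    have h: "gf m \<otimes>\<^bsub>G\<^esub> g \<in> carrier G" using gfp[OF m(1)] g group.subgroup_self[OF grp]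
      by (simp add: grp monoid.m_closed group.is_monoid)
    have ik: "inv\<^bsub>G\<^esub> k \<in> carrier G" using k grp by (simp add: group.inv_closed)
    have "phi x m0 = phi (inv\<^bsub>G\<^esub> k) a" using composition_rule[OF m0 ik h] m x f_def by simp
    also have "\<dots> = phi (inv\<^bsub>G\<^esub> k \<otimes>\<^bsub>G\<^esub> k) m0" using composition_rule[OF m0 ik k(1)] k by simp
    also have "\<dots> = m0" using grp k one by (simp add: group.l_inv)
    finally show "x \<in> G0 G phi m0" unfolding G0_def stabilizer_def x f_def
      using ik h grp by (simp add: monoid.m_closed group.is_monoid)
  qed
  moreover have "inj_on f F"
  proof
    fix m1 m2 assume m1: "m1 \<in> F" and m2: "m2 \<in> F" and e: "f m1 = f m2"
    have c1: "gf m1 \<in> carrier G" "gf m2 \<in> carrier G" using m1 m2 gfp F_def by auto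
    have ik: "inv\<^bsub>G\<^esub> k \<in> carrier G" using k grp by (simp add: group.inv_closed)
    have "gf m1 \<otimes>\<^bsub>G\<^esub> g = gf m2 \<otimes>\<^bsub>G\<^esub> g"
      using e unfolding f_def using c1 g ik group.is_monoid[OF grp] group.Units_eq[OF grp]
      by (simp add: monoid.m_closed monoid.Units_l_cancel)
    hence "gf m1 = gf m2" using group.right_cancel[OF grp] c1 g by blast
    thus "m1 = m2" using gfp m1 m2 F_def by (metis (no_types, lifting) mem_Collect_eq)
  qed
  ultimately have "finite F" "card F \<le> card (G0 G phi m0)"
    using fin by (metis finite_imageD finite_subset, metis card_image card_mono fin)
  thus ?thesis unfolding F_def by blast
qed

theorem corollary1:
  fixes G :: "('a, 'c) monoid_scheme" and M :: "'b set" and phi :: "'a \<Rightarrow> 'b \<Rightarrow> 'b"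
    and m0 :: 'b and gf :: "'b \<Rightarrow> 'a" and A :: "'b set" and cs :: "'a set"
  assumes "cell_space G M phi m0 gf"
    and "finite (G0 G phi m0)"
    and "A \<subseteq> M" and "finite A"
    and "cs \<in> left_cosets_G0 G phi m0"
  shows "finite (semi_act_preimage G M phi m0 gf cs A) \<and>
         card (semi_act_preimage G M phi m0 gf cs A) \<le> card (G0 G phi m0) * card A"
proof -
  define g where "g = (SOME g. g \<in> carrier G \<and> cs = g <#\<^bsub>G\<^esub> G0 G phi m0)"
  have "\<exists>g. g \<in> carrier G \<and> cs = g <#\<^bsub>G\<^esub> G0 G phi m0"
    using assms(5) unfolding left_cosets_G0_def by blast
  hence g: "g \<in> carrier G" unfolding g_def by (metis (mono_tags, lifting) someI_ex)
  have eq: "semi_act_preimage G M phi m0 gf cs A =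
     (\<Union>a\<in>A. {m \<in> M. phi (gf m \<otimes>\<^bsub>G\<^esub> g) m0 = a})"
    unfolding semi_act_preimage_def semi_act_def g_def by auto
  have fb: "\<And>a. a \<in> A \<Longrightarrow> finite {m \<in> M. phi (gf m \<otimes>\<^bsub>G\<^esub> g) m0 = a} \<and>
         card {m \<in> M. phi (gf m \<otimes>\<^bsub>G\<^esub> g) m0 = a} \<le> card (G0 G phi m0)"
    using fiber_bound[OF assms(1,2) g] assms(3) by blast
  have "finite (\<Union>a\<in>A. {m \<in> M. phi (gf m \<otimes>\<^bsub>G\<^esub> g) m0 = a})"
    using fb assms(4) by blast
  moreover have "card (\<Union>a\<in>A. {m \<in> M. phi (gf m \<otimes>\<^bsub>G\<^esub> g) m0 = a})
      \<le> (\<Sum>a\<in>A. card {m \<in> M. phi (gf m \<otimes>\<^bsub>G\<^esub> g) m0 = a})" by (rule card_UN_le[OF assms(4)])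
  moreover have "\<dots> \<le> (\<Sum>a\<in>A. card (G0 G phi m0))" by (rule sum_mono) (use fb in blast)
  ultimately show ?thesis unfolding eq by (simp add: mult.commute)
qed

end
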